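(* Fix $I_{ij},I_{jk},I_{ki}\in[0,\infty)$. Consider the set $$\mathcal{R}_E^{ijk}=\{(r_i,r_j,r_k)\in\mathbb{R}^3_{>0}:\ l_{ij},l_{jk},l_{ki}\text{ satisfy the strict triangle inequalities}\},$$ where $$l_{ij}=\sqrt{r_i^2+r_j^2+2I_{ij}r_ir_j},\quad l_{jk}=\sqrt{r_j^2+r_k^2+2I_{jk}r_jr_k},\quad l_{ki}=\sqrt{r_k^2+r_i^2+2I_{ki}r_kr_i}.$$ Then $\mathcal{R}_E^{ijk}$ is a connected and simply connected open subset of $\mathbb{R}^3_{>0}$. *)

theory Defs
  imports "HOL-Analysis.Analysis"
begin

definition edge_len :: "real \<Rightarrow> real \<Rightarrow> real \<Rightarrow> real" where
  "edge_len I a b = sqrt (a\<^sup>2 + b\<^sup>2 + 2 * I * a * b)"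

definition RE :: "real \<Rightarrow> real \<Rightarrow> real \<Rightarrow> (real \<times> real \<times> real) set" where
  "RE Iij Ijk Iki = {(ri, rj, rk). ri > 0 \<and> rj > 0 \<and> rk > 0 \<and>
     (let lij = edge_len Iij ri rj; ljk = edge_len Ijk rj rk; lki = edge_len Iki rk ri
      in lij < ljk + lki \<and> ljk < lij + lki \<and> lki < lij + ljk)}"

end

theory Submission
  imports Defs
begin

definition qk :: "real \<Rightarrow> real \<Rightarrow> real \<Rightarrow> real \<Rightarrow> real \<Rightarrow> real \<Rightarrow> real" where
  "qk a b c x y z = (1-b\<^sup>2)*x\<^sup>2 + (1-c\<^sup>2)*y\<^sup>2 + (1-a\<^sup>2)*z\<^sup>2 + 2*(b*c+a)*x*y
      + 2*(a*c+b)*y*z + 2*(c+a*b)*x*z"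

lemma qk_rot: "qk a b c x y z = qk b c a y z x"
  unfolding qk_def by (simp add: algebra_simps)

lemma qk_scale: "qk a b c (t*x) (t*y) (t*z) = t\<^sup>2 * qk a b c x y z"
  unfolding qk_def by (simp add: algebra_simps power2_eq_square)

lemma N_super:
  fixes c u1 u2 w1 w2 :: real
  assumes "c \<ge> 1" "u1 \<ge> 0" "u2 \<ge> 0" "w1 \<ge> 0" "w2 \<ge> 0"
  shows "sqrt (u1\<^sup>2 + u2\<^sup>2 + 2*c*u1*u2) + sqrt (w1\<^sup>2 + w2\<^sup>2 + 2*c*w1*w2)
         \<le> sqrt ((u1+w1)\<^sup>2 + (u2+w2)\<^sup>2 + 2*c*(u1+w1)*(u2+w2))"
proof -
  define Nu where "Nu = u1\<^sup>2 + u2\<^sup>2 + 2*c*u1*u2"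
  define Nv where "Nv = w1\<^sup>2 + w2\<^sup>2 + 2*c*w1*w2"
  define Bt where "Bt = u1*w1 + u2*w2 + c*(u1*w2+u2*w1)"
  have c0: "c \<ge> 0" using assms by simp
  have Nu0: "Nu \<ge> 0" unfolding Nu_def using assms c0 by (simp add: add_nonneg_nonneg)
  have Nv0: "Nv \<ge> 0" unfolding Nv_def using assms c0 by (simp add: add_nonneg_nonneg)
  have B0: "Bt \<ge> 0" unfolding Bt_def using assms c0 by (simp add: add_nonneg_nonneg)
  have "Bt\<^sup>2 - Nu*Nv = (c\<^sup>2-1)*(u1*w2-u2*w1)\<^sup>2"
    unfolding Bt_def Nu_def Nv_def by (simp add: algebra_simps power2_eq_square)
  moreover have "(c\<^sup>2-1)*(u1*w2-u2*w1)\<^sup>2 \<ge> 0" using assms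
    by (simp add: mult_nonneg_nonneg)
  ultimately have "Nu*Nv \<le> Bt\<^sup>2" by linarith
  hence s: "sqrt Nu * sqrt Nv \<le> Bt" using B0 Nu0 Nv0
    by (metis real_sqrt_abs real_sqrt_le_mono real_sqrt_mult abs_of_nonneg)
  have eq: "(u1+w1)\<^sup>2 + (u2+w2)\<^sup>2 + 2*c*(u1+w1)*(u2+w2) = Nu + Nv + 2*Bt"
    unfolding Bt_def Nu_def Nv_def by (simp add: algebra_simps power2_eq_square)
  have "(sqrt Nu + sqrt Nv)\<^sup>2 = Nu + Nv + 2 * (sqrt Nu * sqrt Nv)"
    using Nu0 Nv0 by (simp add: power2_sum)
  also have "\<dots> \<le> Nu + Nv + 2*Bt" using s by simp
  finally have "(sqrt Nu + sqrt Nv)\<^sup>2 \<le> Nu + Nv + 2*Bt" .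
  hence "sqrt Nu + sqrt Nv \<le> sqrt (Nu + Nv + 2*Bt)"
    using Nu0 Nv0 by (simp add: real_le_rsqrt)
  thus ?thesis using eq unfolding Nu_def Nv_def by simp
qed

definition NN :: "real \<Rightarrow> real \<Rightarrow> real \<Rightarrow> real" where
  "NN c u1 u2 = u1\<^sup>2 + u2\<^sup>2 + 2*c*u1*u2"

definition mm :: "real \<Rightarrow> real \<Rightarrow> real \<Rightarrow> real \<Rightarrow> real \<Rightarrow> real \<Rightarrow> real" where
  "mm a b c x y z = (c\<^sup>2-1)*y - ((b*c+a)*x + (a*c+b)*z)"

lemma qk_ident:
  "(c\<^sup>2-1) * qk a b c x y z = (a\<^sup>2+b\<^sup>2+c\<^sup>2+2*a*b*c-1) * NN c x z - (mm a b c x y z)\<^sup>2"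
  unfolding qk_def NN_def mm_def by (simp add: algebra_simps power2_eq_square)

lemma qk_pos_iff:
  assumes "c > 1" "a \<ge> 0" "b \<ge> 0" "x \<ge> 0" "z \<ge> 0"
  shows "qk a b c x y z > 0 \<longleftrightarrow>
     \<bar>mm a b c x y z\<bar> < sqrt (a\<^sup>2+b\<^sup>2+c\<^sup>2+2*a*b*c-1) * sqrt (NN c x z)"
proof -
  define D where "D = a\<^sup>2+b\<^sup>2+c\<^sup>2+2*a*b*c-1"
  have "1*1 < c*c" using assms by (intro mult_strict_mono) auto
  hence c2: "c\<^sup>2 - 1 > 0" by (simp add: power2_eq_square)
  have "a\<^sup>2 \<ge> 0" "b\<^sup>2 \<ge> 0" "2*a*b*c \<ge> 0" using assms by auto
  hence D0: "D \<ge> 0" unfolding D_def using c2 by linarith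
  have N0: "NN c x z \<ge> 0" unfolding NN_def using assms by (simp add: add_nonneg_nonneg)
  have "qk a b c x y z > 0 \<longleftrightarrow> (c\<^sup>2-1) * qk a b c x y z > 0"
    using c2 by (simp add: zero_less_mult_iff)
  also have "\<dots> \<longleftrightarrow> (mm a b c x y z)\<^sup>2 < D * NN c x z"
    unfolding qk_ident D_def by simp
  also have "\<dots> \<longleftrightarrow> sqrt ((mm a b c x y z)\<^sup>2) < sqrt (D * NN c x z)"
    by (simp only: real_sqrt_less_iff)
  also have "\<dots> \<longleftrightarrow> \<bar>mm a b c x y z\<bar> < sqrt D * sqrt (NN c x z)"
    by (simp only: real_sqrt_mult real_sqrt_abs)
  finally show ?thesis unfolding D_def .
qed

lemma qk_add_c:
  assumes "c > 1" "a \<ge> 0" "b \<ge> 0"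
    and "x1 > 0" "x2 > 0" "x3 > 0" "y1 > 0" "y2 > 0" "y3 > 0"
    and "qk a b c x1 x2 x3 > 0" "qk a b c y1 y2 y3 > 0"
  shows "qk a b c (x1+y1) (x2+y2) (x3+y3) > 0"
proof -
  define S where "S = sqrt (a\<^sup>2+b\<^sup>2+c\<^sup>2+2*a*b*c-1)"
  have "1*1 < c*c" using assms by (intro mult_strict_mono) auto
  moreover have "a*a \<ge> 0" "b*b \<ge> 0" "2*a*b*c \<ge> 0" using assms by auto
  ultimately have "a*a+b*b+c*c+2*a*b*c-1 \<ge> 0" by linarith
  hence "a\<^sup>2+b\<^sup>2+c\<^sup>2+2*a*b*c-1 \<ge> 0" by (simp add: power2_eq_square)
  hence S0: "S \<ge> 0" unfolding S_def by simp
  have hx: "\<bar>mm a b c x1 x2 x3\<bar> < S * sqrt (NN c x1 x3)"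
    using qk_pos_iff[of c a b x1 x3 x2] assms unfolding S_def by simp
  have hy: "\<bar>mm a b c y1 y2 y3\<bar> < S * sqrt (NN c y1 y3)"
    using qk_pos_iff[of c a b y1 y3 y2] assms unfolding S_def by simp
  have madd: "mm a b c (x1+y1) (x2+y2) (x3+y3) = mm a b c x1 x2 x3 + mm a b c y1 y2 y3"
    unfolding mm_def by (simp add: algebra_simps)
  have Nsup: "sqrt (NN c x1 x3) + sqrt (NN c y1 y3) \<le> sqrt (NN c (x1+y1) (x3+y3))"
    unfolding NN_def using N_super[of c x1 x3 y1 y3] assms by simp
  have "\<bar>mm a b c (x1+y1) (x2+y2) (x3+y3)\<bar> \<le> \<bar>mm a b c x1 x2 x3\<bar> + \<bar>mm a b c y1 y2 y3\<bar>"
    unfolding madd by (rule abs_triangle_ineq)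
  also have "\<dots> < S * (sqrt (NN c x1 x3) + sqrt (NN c y1 y3))"
    using hx hy by (simp add: distrib_left)
  also have "\<dots> \<le> S * sqrt (NN c (x1+y1) (x3+y3))"
    using Nsup S0 by (simp add: mult_left_mono)
  finally show ?thesis
    using qk_pos_iff[of c a b "x1+y1" "x3+y3" "x2+y2"] assms unfolding S_def by simp
qed

lemma qk_pos_le1:
  assumes "0 \<le> a" "a \<le> 1" "0 \<le> b" "b \<le> 1" "0 \<le> c" "c \<le> 1"
    and "x > 0" "y > 0" "z > 0"
  shows "qk a b c x y z > 0"
proof -
  have t1: "(1-b\<^sup>2)*x\<^sup>2 \<ge> 0" using assms by (simp add: power_le_one)
  have t2: "(1-c\<^sup>2)*y\<^sup>2 \<ge> 0" using assms by (simp add: power_le_one)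
  have t3: "(1-a\<^sup>2)*z\<^sup>2 \<ge> 0" using assms by (simp add: power_le_one)
  have t4: "2*(b*c+a)*x*y \<ge> 0" using assms by simp
  have t5: "2*(a*c+b)*y*z \<ge> 0" using assms by simp
  have t6: "2*(c+a*b)*x*z \<ge> 0" using assms by simp
  show ?thesis
  proof (cases "c + a*b > 0")
    case True
    hence "2*(c+a*b)*x*z > 0" using assms by simp
    thus ?thesis unfolding qk_def using t1 t2 t3 t4 t5 by linarith
  next
    case False
    hence "c = 0" using assms by (smt (verit) mult_nonneg_nonneg)
    hence "(1-c\<^sup>2)*y\<^sup>2 > 0" using assms by simp
    thus ?thesis unfolding qk_def using t1 t3 t4 t5 t6 by linarith
  qed
qed

lemma qk_add:
  assumes "a \<ge> 0" "b \<ge> 0" "c \<ge> 0"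
    and "x1 > 0" "x2 > 0" "x3 > 0" "y1 > 0" "y2 > 0" "y3 > 0"
    and "qk a b c x1 x2 x3 > 0" "qk a b c y1 y2 y3 > 0"
  shows "qk a b c (x1+y1) (x2+y2) (x3+y3) > 0"
proof -
  have r2: "qk a b c x y z = qk c a b z x y" for x y z
    using qk_rot by metis
  consider "c > 1" | "a > 1" | "b > 1" | "a \<le> 1 \<and> b \<le> 1 \<and> c \<le> 1" by linarith
  then show ?thesis
  proof cases
    case 1 thus ?thesis using qk_add_c assms by blast
  next
    case 2
    have "qk b c a (x2+y2) (x3+y3) (x1+y1) > 0"
      by (rule qk_add_c) (use assms 2 qk_rot[of a b c] in auto)
    thus ?thesis using qk_rot[of a b c] by simp
  next
    case 3
    have "qk c a b (x3+y3) (x1+y1) (x2+y2) > 0"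
      by (rule qk_add_c) (use assms 3 r2 in auto)
    thus ?thesis using r2 by simp
  next
    case 4 thus ?thesis using qk_pos_le1 assms by simp
  qed
qed

definition H3 :: "real \<Rightarrow> real \<Rightarrow> real \<Rightarrow> real \<Rightarrow> real \<Rightarrow> real \<Rightarrow> real" where
  "H3 a b c x y z = (let L1 = x\<^sup>2+y\<^sup>2+2*a*x*y; L2 = y\<^sup>2+z\<^sup>2+2*b*y*z; L3 = z\<^sup>2+x\<^sup>2+2*c*z*x
     in 2*(L1*L2+L2*L3+L3*L1) - (L1\<^sup>2+L2\<^sup>2+L3\<^sup>2))"

lemma qk_poly: "(x*y*z)\<^sup>2 * qk a b c (1/x) (1/y) (1/z) =
  (if x = 0 \<or> y = 0 \<or> z = 0 then 0 else (1-b\<^sup>2)*(y*z)\<^sup>2 + (1-c\<^sup>2)*(x*z)\<^sup>2 + (1-a\<^sup>2)*(x*y)\<^sup>2 + 2*(b*c+a)*(z*z*x*y)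
      + 2*(a*c+b)*(x*x*y*z) + 2*(c+a*b)*(y*y*x*z))"
  unfolding qk_def by (auto simp: field_simps power2_eq_square)

lemma H3_qk:
  assumes "x \<noteq> 0" "y \<noteq> 0" "z \<noteq> 0"
  shows "H3 a b c x y z = 4*((x*y*z)\<^sup>2 * qk a b c (1/x) (1/y) (1/z))"
  unfolding qk_poly using assms unfolding H3_def Let_def
  by (simp add: algebra_simps power2_eq_square)

lemma tri_iff:
  fixes l1 l2 l3 :: real
  assumes "l1 > 0" "l2 > 0" "l3 > 0"
  shows "(l1 < l2 + l3 \<and> l2 < l1 + l3 \<and> l3 < l1 + l2) \<longleftrightarrow>
    0 < 2*(l1\<^sup>2*l2\<^sup>2+l2\<^sup>2*l3\<^sup>2+l3\<^sup>2*l1\<^sup>2) - ((l1\<^sup>2)\<^sup>2+(l2\<^sup>2)\<^sup>2+(l3\<^sup>2)\<^sup>2)"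
proof -
  have eq: "2*(l1\<^sup>2*l2\<^sup>2+l2\<^sup>2*l3\<^sup>2+l3\<^sup>2*l1\<^sup>2) - ((l1\<^sup>2)\<^sup>2+(l2\<^sup>2)\<^sup>2+(l3\<^sup>2)\<^sup>2)
     = (l1+l2+l3) * ((l2+l3-l1) * ((l1+l3-l2) * (l1+l2-l3)))"
    by algebra
  have s: "l1+l2+l3 > 0" using assms by simp
  show ?thesis unfolding eq
  proof
    assume h: "l1 < l2 + l3 \<and> l2 < l1 + l3 \<and> l3 < l1 + l2"
    thus "0 < (l1+l2+l3) * ((l2+l3-l1) * ((l1+l3-l2) * (l1+l2-l3)))"
      using s by (intro mult_pos_pos) auto
  next
    assume h: "0 < (l1+l2+l3) * ((l2+l3-l1) * ((l1+l3-l2) * (l1+l2-l3)))"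
    hence h': "0 < (l2+l3-l1) * ((l1+l3-l2) * (l1+l2-l3))" using s
      by (simp add: zero_less_mult_iff)
    show "l1 < l2 + l3 \<and> l2 < l1 + l3 \<and> l3 < l1 + l2"
    proof (rule ccontr)
      assume "\<not> ?thesis"
      then consider "l1 \<ge> l2 + l3" | "l2 \<ge> l1 + l3" | "l3 \<ge> l1 + l2" by linarith
      thus False
      proof cases
        case 1
        hence "(l2+l3-l1) \<le> 0" "(l1+l3-l2) * (l1+l2-l3) \<ge> 0" using assms by auto
        hence "(l2+l3-l1) * ((l1+l3-l2) * (l1+l2-l3)) \<le> 0" by (rule mult_nonpos_nonneg)
        thus False using h' by linarith
      next
        case 2
        hence "(l1+l3-l2) \<le> 0" "(l2+l3-l1) \<ge> 0" "(l1+l2-l3) \<ge> 0" using assms by auto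
        hence "(l2+l3-l1) * ((l1+l3-l2) * (l1+l2-l3)) \<le> 0"
          by (intro mult_nonneg_nonpos mult_nonpos_nonneg)
        thus False using h' by linarith
      next
        case 3
        hence "(l1+l2-l3) \<le> 0" "(l2+l3-l1) \<ge> 0" "(l1+l3-l2) \<ge> 0" using assms by auto
        hence "(l2+l3-l1) * ((l1+l3-l2) * (l1+l2-l3)) \<le> 0"
          by (intro mult_nonneg_nonpos mult_nonneg_nonpos)
        thus False using h' by linarith
      qed
    qed
  qed
qed

lemma edge_len_sq:
  assumes "I \<ge> 0" "x > 0" "y > 0"
  shows "edge_len I x y > 0" "(edge_len I x y)\<^sup>2 = x\<^sup>2 + y\<^sup>2 + 2*I*x*y"
proof -
  have "x\<^sup>2 + y\<^sup>2 + 2*I*x*y > 0" using assms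
    by (simp add: add_pos_nonneg)
  thus "edge_len I x y > 0" "(edge_len I x y)\<^sup>2 = x\<^sup>2 + y\<^sup>2 + 2*I*x*y"
    unfolding edge_len_def by simp_all
qed

lemma RE_mem:
  assumes "a \<ge> 0" "b \<ge> 0" "c \<ge> 0"
  shows "(x, y, z) \<in> RE a b c \<longleftrightarrow> x > 0 \<and> y > 0 \<and> z > 0 \<and> H3 a b c x y z > 0"
proof (cases "x > 0 \<and> y > 0 \<and> z > 0")
  case True
  note l1 = edge_len_sq[OF assms(1), of x y]
  note l2 = edge_len_sq[OF assms(2), of y z]
  note l3 = edge_len_sq[OF assms(3), of z x]
  have "(x, y, z) \<in> RE a b c \<longleftrightarrow>
     (edge_len a x y < edge_len b y z + edge_len c z x \<and> edge_len b y z < edge_len a x y + edge_len c z x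
       \<and> edge_len c z x < edge_len a x y + edge_len b y z)"
    unfolding RE_def using True by (simp add: Let_def)
  also have "\<dots> \<longleftrightarrow> H3 a b c x y z > 0"
    using tri_iff[of "edge_len a x y" "edge_len b y z" "edge_len c z x"] l1 l2 l3 True
    unfolding H3_def Let_def by simp
  finally show ?thesis using True by simp
next
  case False
  thus ?thesis unfolding RE_def by auto
qed

definition CK :: "real \<Rightarrow> real \<Rightarrow> real \<Rightarrow> (real \<times> real \<times> real) set" where
  "CK a b c = {(x, y, z). x > 0 \<and> y > 0 \<and> z > 0 \<and> qk a b c x y z > 0}"

lemma CK_scale:
  assumes "(x, y, z) \<in> CK a b c" "t > 0"
  shows "(t*x, t*y, t*z) \<in> CK a b c"
  using assms unfolding CK_def by (simp add: qk_scale)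

lemma convex_CK:
  assumes "a \<ge> 0" "b \<ge> 0" "c \<ge> 0"
  shows "convex (CK a b c)"
  unfolding convex_def
proof (intro ballI allI impI)
  fix p q :: "real \<times> real \<times> real" and u w :: real
  assume p: "p \<in> CK a b c" and q: "q \<in> CK a b c" and uv: "0 \<le> u" "0 \<le> w" "u + w = 1"
  obtain x1 x2 x3 where px: "p = (x1, x2, x3)" by (metis prod.exhaust)
  obtain y1 y2 y3 where qy: "q = (y1, y2, y3)" by (metis prod.exhaust)
  show "u *\<^sub>R p + w *\<^sub>R q \<in> CK a b c"
  proof (cases "u = 0")
    case True
    thus ?thesis using uv q by simp
  next
    case False
    show ?thesis
    proof (cases "w = 0")
      case True
      thus ?thesis using uv p by simp
    next
      case False
      have u0: "u > 0" using \<open>u \<noteq> 0\<close> uv by simp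
      have w0: "w > 0" using False uv by simp
      have A: "(u*x1, u*x2, u*x3) \<in> CK a b c" using CK_scale p px u0 by simp
      have B: "(w*y1, w*y2, w*y3) \<in> CK a b c" using CK_scale q qy w0 by simp
      have "qk a b c (u*x1 + w*y1) (u*x2 + w*y2) (u*x3 + w*y3) > 0"
        using A B assms by (intro qk_add) (auto simp: CK_def)
      moreover have "u*x1 + w*y1 > 0" "u*x2 + w*y2 > 0" "u*x3 + w*y3 > 0"
        using A B by (auto simp: CK_def)
      ultimately show ?thesis unfolding px qy CK_def by simp
    qed
  qed
qed

definition finv :: "real \<times> real \<times> real \<Rightarrow> real \<times> real \<times> real" where
  "finv p = (1 / fst p, 1 / fst (snd p), 1 / snd (snd p))"

lemma RE_CK:
  assumes "a \<ge> 0" "b \<ge> 0" "c \<ge> 0"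
  shows "p \<in> RE a b c \<longleftrightarrow> finv p \<in> CK a b c"
proof -
  obtain x y z where p: "p = (x, y, z)" by (metis prod.exhaust)
  show ?thesis
  proof (cases "x > 0 \<and> y > 0 \<and> z > 0")
    case True
    have "H3 a b c x y z > 0 \<longleftrightarrow> qk a b c (1/x) (1/y) (1/z) > 0"
      using True H3_qk[of x y z a b c] by (simp add: zero_less_mult_iff)
    thus ?thesis unfolding p RE_mem[OF assms] finv_def CK_def using True by simp
  next
    case False
    thus ?thesis unfolding p RE_mem[OF assms] finv_def CK_def by auto
  qed
qed

lemma finv_finv: "p \<in> CK a b c \<Longrightarrow> finv (finv p) = p"
  unfolding finv_def CK_def by auto

lemma finv_finv2: "p \<in> RE a b c \<Longrightarrow> finv (finv p) = p"
  unfolding finv_def RE_def by auto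

lemma cont_finv:
  assumes "\<And>p. p \<in> S \<Longrightarrow> fst p \<noteq> 0 \<and> fst (snd p) \<noteq> 0 \<and> snd (snd p) \<noteq> 0"
  shows "continuous_on S finv"
  unfolding finv_def using assms by (intro continuous_intros) auto

lemma homeo_CK_RE:
  assumes "a \<ge> 0" "b \<ge> 0" "c \<ge> 0"
  shows "CK a b c homeomorphic RE a b c"
proof (rule homeomorphicI[where f = finv and g = finv])
  show "finv ` CK a b c = RE a b c"
  proof
    show "finv ` CK a b c \<subseteq> RE a b c"
    proof
      fix q assume "q \<in> finv ` CK a b c"
      then obtain p where p: "p \<in> CK a b c" "q = finv p" by auto
      hence "finv (finv p) \<in> CK a b c" using finv_finv by metis
      thus "q \<in> RE a b c" using RE_CK[OF assms] p by simp
    qed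
    show "RE a b c \<subseteq> finv ` CK a b c"
    proof
      fix p assume "p \<in> RE a b c"
      thus "p \<in> finv ` CK a b c" using RE_CK[OF assms] finv_finv2
        by (metis image_eqI)
    qed
  qed
  show "finv ` RE a b c = CK a b c"
  proof
    show "finv ` RE a b c \<subseteq> CK a b c"
      using RE_CK[OF assms] by auto
    show "CK a b c \<subseteq> finv ` RE a b c"
    proof
      fix p assume "p \<in> CK a b c"
      thus "p \<in> finv ` RE a b c" using RE_CK[OF assms] finv_finv
        by (metis image_eqI)
    qed
  qed
  show "continuous_on (CK a b c) finv"
    by (rule cont_finv) (auto simp: CK_def)
  show "continuous_on (RE a b c) finv"
    by (rule cont_finv) (auto simp: RE_def)
  show "\<And>x. x \<in> CK a b c \<Longrightarrow> finv (finv x) = x" by (rule finv_finv)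
  show "\<And>x. x \<in> RE a b c \<Longrightarrow> finv (finv x) = x" by (rule finv_finv2)
qed

lemma RE_eq_set:
  assumes "a \<ge> 0" "b \<ge> 0" "c \<ge> 0"
  shows "RE a b c = {p. 0 < fst p} \<inter> {p. 0 < fst (snd p)} \<inter> {p. 0 < snd (snd p)}
     \<inter> {p. 0 < H3 a b c (fst p) (fst (snd p)) (snd (snd p))}"
  using RE_mem[OF assms] by auto

lemma open_RE:
  assumes "a \<ge> 0" "b \<ge> 0" "c \<ge> 0"
  shows "open (RE a b c)"
  unfolding RE_eq_set[OF assms]
  by (intro open_Int open_Collect_less continuous_intros)
     (auto simp: H3_def Let_def intro!: continuous_intros)

theorem lemma2p1:
  fixes Iij Ijk Iki :: real
  assumes "Iij \<ge> 0" and "Ijk \<ge> 0" and "Iki \<ge> 0"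
  shows "RE Iij Ijk Iki \<subseteq> {(ri, rj, rk). ri > 0 \<and> rj > 0 \<and> rk > 0}
       \<and> open (RE Iij Ijk Iki)
       \<and> connected (RE Iij Ijk Iki)
       \<and> simply_connected (RE Iij Ijk Iki)"
proof (intro conjI)
  show "RE Iij Ijk Iki \<subseteq> {(ri, rj, rk). ri > 0 \<and> rj > 0 \<and> rk > 0}"
    unfolding RE_def by auto
  show "open (RE Iij Ijk Iki)" using open_RE assms by blast
  have h: "CK Iij Ijk Iki homeomorphic RE Iij Ijk Iki" using homeo_CK_RE assms by blast
  have cv: "convex (CK Iij Ijk Iki)" using convex_CK assms by blast
  show "connected (RE Iij Ijk Iki)"
    using homeomorphic_connectedness[OF h] convex_connected[OF cv] by simp
  show "simply_connected (RE Iij Ijk Iki)"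
    using homeomorphic_simply_connected[OF h convex_imp_simply_connected[OF cv]] .
qed

end
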